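(* Let $p>2$ and $p'=p/(p-1)$, and let $\delta_0>0$ be the constant of Lemma 4.1 (depending only on $p$). There exist constants $C>1$ and $r_0\in(0,1]$, depending only on $p$, such that: if $B_1\subset\mathbb{R}^2$, $f\in L^\infty(B_1)$ with $\|f\|_{L^\infty(B_1)}\le\delta_0$, and $u\in W^{1,p}(B_1)$ is a weak solution of $-\Delta_p u=f$ in $B_1$ with $\|u\|_{L^\infty(B_1)}\le1$, then for all $0<r\le r_0$, $$\sup_{x\in B_r}|u(x)-u(0)|\le C\,r^{p'}\left(1+|\nabla u(0)|\,r^{\frac{1}{1-p}}\right).$$
   Context: Lemma 4.1: there exist $\lambda_0\in(0,1/2)$ and $\delta_0>0$, depending only on $p$, such that for every weak solution $u\in W^{1,p}(B_1)$, $B_1\subset\mathbb{R}^2$, of $-\Delta_p u=f$ with $\|u\|_\infty\le1$ and $\|f\|_\infty\le\delta_0$ one has $\sup_{B_{\lambda_0}}|u(x)-u(0)-\nabla u(0)\cdot x|\le\lambda_0^{p'}$. Here $\Delta_p u=\operatorname{div}(|\nabla u|^{p-2}\nabla u)$ and $B_r$ is the open disk of radius $r$ centered at the origin. *)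

theory Defs
  imports "HOL-Analysis.Analysis"
begin

text \<open>Points of the plane are vectors of type real^2; integrals are Lebesgue/Henstock
integrals over subsets of the plane (for absolutely integrable functions they agree).\<close>

definition test_fun :: "(real^2) set \<Rightarrow> (real^2 \<Rightarrow> real) \<Rightarrow> (real^2 \<Rightarrow> real^2) \<Rightarrow> bool" where
  "test_fun U \<phi> D\<phi> \<longleftrightarrow>
     (\<forall>x. (\<phi> has_derivative (\<lambda>h. D\<phi> x \<bullet> h)) (at x)) \<and> continuous_on UNIV D\<phi> \<and>
     (\<exists>K. compact K \<and> K \<subseteq> U \<and> (\<forall>x. x \<notin> K \<longrightarrow> \<phi> x = 0))"

definition weak_gradient :: "(real^2) set \<Rightarrow> (real^2 \<Rightarrow> real) \<Rightarrow> (real^2 \<Rightarrow> real^2) \<Rightarrow> bool" where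
  "weak_gradient U u G \<longleftrightarrow>
     (\<forall>\<phi> D\<phi>. test_fun U \<phi> D\<phi> \<longrightarrow>
        (\<forall>i. integral U (\<lambda>x. u x * D\<phi> x $ i) = - integral U (\<lambda>x. G x $ i * \<phi> x)))"

definition sobolev_W1p :: "real \<Rightarrow> (real^2) set \<Rightarrow> (real^2 \<Rightarrow> real) \<Rightarrow> (real^2 \<Rightarrow> real^2) \<Rightarrow> bool" where
  "sobolev_W1p p U u G \<longleftrightarrow>
     u measurable_on U \<and> (\<lambda>x. \<bar>u x\<bar> powr p) integrable_on U \<and>
     G measurable_on U \<and> (\<lambda>x. norm (G x) powr p) integrable_on U \<and>
     weak_gradient U u G"

definition weak_sol_plap :: "real \<Rightarrow> (real^2) set \<Rightarrow> (real^2 \<Rightarrow> real) \<Rightarrow> (real^2 \<Rightarrow> real^2)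
    \<Rightarrow> (real^2 \<Rightarrow> real) \<Rightarrow> bool" where
  "weak_sol_plap p U u G f \<longleftrightarrow>
     sobolev_W1p p U u G \<and>
     (\<forall>\<phi> D\<phi>. test_fun U \<phi> D\<phi> \<longrightarrow>
        integral U (\<lambda>x. norm (G x) powr (p - 2) * (G x \<bullet> D\<phi> x)) = integral U (\<lambda>x. f x * \<phi> x))"

definition Linf_bound :: "(real^2) set \<Rightarrow> (real^2 \<Rightarrow> real) \<Rightarrow> real \<Rightarrow> bool" where
  "Linf_bound U f d \<longleftrightarrow> f measurable_on U \<and> negligible {x \<in> U. \<bar>f x\<bar> > d}"

text \<open>The conclusion of Lemma 4.1 for given constants lambda0, delta0.
 u is taken to be its continuous representative, and g0 is the gradient of u at 0.\<close>
definition lemma41_prop :: "real \<Rightarrow> real \<Rightarrow> real \<Rightarrow> bool" where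
  "lemma41_prop p lam0 \<delta>0 \<longleftrightarrow>
     (\<forall>u G f g0.
        weak_sol_plap p (ball 0 1) u G f \<and> continuous_on (ball 0 1) u \<and>
        (\<forall>x\<in>ball 0 1. \<bar>u x\<bar> \<le> 1) \<and> Linf_bound (ball 0 1) f \<delta>0 \<and>
        (u has_derivative (\<lambda>h. g0 \<bullet> h)) (at 0)
      \<longrightarrow> (\<forall>x\<in>ball 0 lam0. \<bar>u x - u 0 - g0 \<bullet> x\<bar> \<le> lam0 powr (p / (p - 1))))"

end

theory Submission
  imports Defs
begin

lemma test_fun_D_zero:
  assumes "test_fun U \<phi> D\<phi>" "compact K" "\<forall>x. x \<notin> K \<longrightarrow> \<phi> x = 0" "x \<notin> K"
  shows "D\<phi> x = 0"
proof -
  have d: "(\<phi> has_derivative (\<lambda>h. D\<phi> x \<bullet> h)) (at x)" using assms(1) unfolding test_fun_def by blast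
  have "((\<lambda>_. 0::real) has_derivative (\<lambda>h. 0)) (at x)" by simp
  then have "(\<phi> has_derivative (\<lambda>h. 0)) (at x)"
    apply (rule has_derivative_transform_within_open[where s="- K"])
    using assms compact_imp_closed by auto
  from has_derivative_unique[OF d this] have "\<And>h. D\<phi> x \<bullet> h = 0" by metis
  then show ?thesis by (metis inner_eq_zero_iff)
qed

lemma test_fun_bounds:
  assumes "test_fun U \<phi> D\<phi>"
  obtains K M where "compact K" "K \<subseteq> U" "\<forall>x. x \<notin> K \<longrightarrow> \<phi> x = 0" "\<forall>x. x \<notin> K \<longrightarrow> D\<phi> x = 0"
     "\<forall>x. norm (D\<phi> x) \<le> M" "\<forall>x. \<bar>\<phi> x\<bar> \<le> M" "continuous_on UNIV \<phi>" "continuous_on UNIV D\<phi>"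
proof -
  obtain K where K: "compact K" "K \<subseteq> U" "\<forall>x. x \<notin> K \<longrightarrow> \<phi> x = 0"
    using assms unfolding test_fun_def by blast
  have cD: "continuous_on UNIV D\<phi>" using assms unfolding test_fun_def by blast
  have cphi: "continuous_on UNIV \<phi>"
    using assms unfolding test_fun_def
    by (meson continuous_at_imp_continuous_on has_derivative_continuous)
  have DK: "\<forall>x. x \<notin> K \<longrightarrow> D\<phi> x = 0" using test_fun_D_zero[OF assms K(1,3)] by blast
  obtain M1 where M1: "\<forall>y\<in>D\<phi> ` K. norm y \<le> M1"
    using compact_imp_bounded[OF compact_continuous_image[OF continuous_on_subset[OF cD] K(1)]]
    unfolding bounded_iff by auto
  obtain M2 where M2: "\<forall>y\<in>\<phi> ` K. norm y \<le> M2"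
    using compact_imp_bounded[OF compact_continuous_image[OF continuous_on_subset[OF cphi] K(1)]]
    unfolding bounded_iff by auto
  define M where "M = max (max M1 M2) 0"
  have "\<forall>x. norm (D\<phi> x) \<le> M"
  proof
    fix x show "norm (D\<phi> x) \<le> M" using M1 DK unfolding M_def by (cases "x \<in> K") force+
  qed
  moreover have "\<forall>x. \<bar>\<phi> x\<bar> \<le> M"
  proof
    fix x show "\<bar>\<phi> x\<bar> \<le> M" using M2 K(3) unfolding M_def by (cases "x \<in> K") force+
  qed
  ultimately show ?thesis using that K DK cphi cD by blast
qed

lemma absint_bounded_cont:
  fixes h :: "real^2 \<Rightarrow> real"
  assumes "continuous_on S h" "S \<in> lmeasurable" "\<And>x. x\<in>S \<Longrightarrow> \<bar>h x\<bar> \<le> M"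
  shows "h absolutely_integrable_on S"
  apply (rule measurable_bounded_by_integrable_imp_absolutely_integrable[where g="\<lambda>_. M"])
  using assms continuous_imp_measurable_on_sets_lebesgue integrable_on_const fmeasurableD by auto

lemma scale_ball: fixes s::real assumes "s>0"
  shows "(\<lambda>x. s *\<^sub>R x) ` ball (0::'a::real_normed_vector) 1 = ball 0 s"
proof
  show "(\<lambda>x. s *\<^sub>R x) ` ball 0 1 \<subseteq> ball (0::'a) s" using assms by auto
  show "ball 0 s \<subseteq> (\<lambda>x. s *\<^sub>R x) ` ball (0::'a) 1"
  proof
    fix y assume "y \<in> ball (0::'a) s"
    then have "y = s *\<^sub>R (y /\<^sub>R s)" "y /\<^sub>R s \<in> ball 0 1" using assms by (auto simp: field_simps)
    then show "y \<in> (\<lambda>x. s *\<^sub>R x) ` ball 0 1" by blast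
  qed
qed

lemma vec_int1: "integral S (\<lambda>y. vec (h y) :: real^1) $ 1 = integral S h"
  by (subst integral_on_1_eq) simp

lemma cov_scale:
  fixes h :: "real^2 \<Rightarrow> real" and s :: real
  assumes "s > 0" "h absolutely_integrable_on ball 0 s"
  shows "(\<lambda>x. h (s *\<^sub>R x)) absolutely_integrable_on ball 0 1"
    and "integral (ball 0 1) (\<lambda>x. h (s *\<^sub>R x)) = integral (ball 0 s) h / s^2"
proof -
  let ?g = "\<lambda>x::real^2. s *\<^sub>R x"
  have lin: "linear ?g" using bounded_linear_scaleR_right by (rule bounded_linear.linear)
  have det: "det (matrix ?g) = s^2" using det_matrix_scaleR[of s, where 'n=2] by simp
  define F where "F = (\<lambda>y. vec (h y) :: real^1)"
  have F: "F absolutely_integrable_on ?g ` ball 0 1"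
    unfolding F_def by (subst absolutely_integrable_on_1_iff) (simp add: scale_ball[OF assms(1)] assms)
  have Fg: "(F \<circ> ?g) absolutely_integrable_on ball 0 1"
    using absolutely_integrable_on_linear_image[OF lin] F det assms by auto
  then show "(\<lambda>x. h (s *\<^sub>R x)) absolutely_integrable_on ball 0 1"
    by (subst (asm) absolutely_integrable_on_1_iff) (simp add: F_def o_def)
  have "integral (?g ` ball 0 1) F = \<bar>det (matrix ?g)\<bar> *\<^sub>R integral (ball 0 1) (F \<circ> ?g)"
    by (rule integral_change_of_variables_linear[OF lin]) (use F in auto)
  then have "integral (ball 0 s) F $ 1 = (s^2 *\<^sub>R integral (ball 0 1) (F \<circ> ?g)) $ 1"
    by (simp add: scale_ball[OF assms(1)])
  then have "integral (ball 0 s) h = s^2 * integral (ball 0 1) (\<lambda>x. h (s *\<^sub>R x))"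
    by (simp add: F_def o_def vec_int1)
  then show "integral (ball 0 1) (\<lambda>x. h (s *\<^sub>R x)) = integral (ball 0 s) h / s^2"
    using assms by (simp add: field_simps)
qed

lemma integral_transfer:
  fixes h :: "'n::euclidean_space \<Rightarrow> real"
  assumes "\<forall>x. x \<notin> S \<longrightarrow> h x = 0" "S \<subseteq> A" "S \<subseteq> A'"
  shows "integral A h = integral A' h"
proof -
  have eq: "(\<lambda>x. if x \<in> A then h x else 0) = (\<lambda>x. if x \<in> A' then h x else 0)" using assms by (intro ext) auto
  have "integral A h = integral UNIV (\<lambda>x. if x \<in> A then h x else 0)"
    by (rule Henstock_Kurzweil_Integration.integral_restrict_UNIV[symmetric])
  also have "\<dots> = integral UNIV (\<lambda>x. if x \<in> A' then h x else 0)" by (simp only: eq)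
  also have "\<dots> = integral A' h" by (rule Henstock_Kurzweil_Integration.integral_restrict_UNIV)
  finally show ?thesis .
qed

lemma norm_le4: fixes x :: "real^2" assumes "\<forall>j. \<bar>x $ j\<bar> \<le> 2" shows "norm x \<le> 4"
proof -
  have "norm x \<le> (\<Sum>j\<in>UNIV. \<bar>x $ j\<bar>)" by (rule norm_le_l1_cart)
  also have "\<dots> \<le> of_nat (card (UNIV::2 set)) * 2" by (rule sum_bounded_above) (use assms in auto)
  finally show ?thesis by simp
qed

lemma int_partial_zero:
  fixes \<phi> :: "real^2 \<Rightarrow> real"
  assumes T: "test_fun (ball 0 1) \<phi> D\<phi>"
  shows "integral (ball 0 1) (\<lambda>x. D\<phi> x $ i) = 0"
proof -
  obtain K M where K: "compact K" "K \<subseteq> ball 0 1" "\<forall>x. x \<notin> K \<longrightarrow> \<phi> x = 0" "\<forall>x. x \<notin> K \<longrightarrow> D\<phi> x = 0"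
     and M: "\<forall>x. norm (D\<phi> x) \<le> M" "\<forall>x. \<bar>\<phi> x\<bar> \<le> M"
     and cphi: "continuous_on UNIV \<phi>" and cD: "continuous_on UNIV D\<phi>" by (rule test_fun_bounds[OF T])
  define a :: "real^2" where "a = - (\<chi> j. 2)"
  define b :: "real^2" where "b = (\<chi> j. 2)"
  let ?Q = "cbox a b"
  have ballQ: "ball (0::real^2) 2 \<subseteq> ?Q"
  proof
    fix x :: "real^2" assume "x \<in> ball 0 2"
    then have n2: "norm x < 2" by simp
    have "- 2 \<le> x $ j \<and> x $ j \<le> 2" for j
      using component_le_norm_cart[of x j] n2 by (simp add: abs_le_iff)
    then have "\<forall>j. - 2 \<le> x $ j \<and> x $ j \<le> 2" by blast
    then show "x \<in> ?Q" unfolding a_def b_def mem_box_cart by simp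
  qed
  have Qn: "norm x \<le> 4" if "x \<in> ?Q" for x
  proof -
    have h: "- 2 \<le> x $ j \<and> x $ j \<le> 2" for j using that unfolding a_def b_def mem_box_cart by simp
    have "\<bar>x $ j\<bar> \<le> 2" for j using h[of j] by (simp add: abs_le_iff)
    then have "\<forall>j. \<bar>x $ j\<bar> \<le> 2" by blast
    then show ?thesis by (rule norm_le4)
  qed
  define e :: "real^2" where "e = axis i 1"
  have ne: "norm e = 1" unfolding e_def by simp
  have dphi: "\<And>x. (\<phi> has_derivative (\<lambda>h. D\<phi> x \<bullet> h)) (at x)" using T unfolding test_fun_def by blast
  have b12: "ball (0::real^2) 1 \<subseteq> ball 0 2" by (rule subset_ball) simp
  have KQ: "K \<subseteq> ?Q" using K(2) b12 ballQ by (rule subset_trans[OF subset_trans])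
  define J where "J = integral ?Q (\<lambda>x. D\<phi> x $ i)"
  have J_eq: "integral (ball 0 1) (\<lambda>x. D\<phi> x $ i) = J"
    unfolding J_def
  proof (rule integral_transfer[where S=K])
    show "\<forall>x. x \<notin> K \<longrightarrow> D\<phi> x $ i = 0" using K(4) by simp
    show "K \<subseteq> ball 0 1" by (rule K(2))
    show "K \<subseteq> ?Q" using KQ .
  qed
  have cDi: "continuous_on UNIV (\<lambda>x. D\<phi> x $ i)" by (intro continuous_intros cD)
  have uc: "uniformly_continuous_on (cball 0 5) D\<phi>"
    by (rule compact_uniformly_continuous[OF continuous_on_subset[OF cD subset_UNIV] compact_cball])
  have key: "\<bar>J\<bar> \<le> \<epsilon> * Henstock_Kurzweil_Integration.content ?Q" if eps: "\<epsilon> > 0" for \<epsilon>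
  proof -
    obtain d where d: "d > 0" "\<forall>x\<in>cball 0 5. \<forall>y\<in>cball 0 5. dist y x < d \<longrightarrow> dist (D\<phi> y) (D\<phi> x) < \<epsilon>"
      using uc eps unfolding uniformly_continuous_on_def by metis
    define t where "t = min 1 (d/2)"
    have t: "0 < t" "t \<le> 1" "t < d" using d by (auto simp: t_def)
    have int_phi: "\<phi> integrable_on ?Q" using cphi continuous_on_subset integrable_continuous by blast
    then obtain I where I: "(\<phi> has_integral I) ?Q" by blast
    have "((\<lambda>x. \<phi> (1 *\<^sub>R x + t *\<^sub>R e)) has_integral (1 / (\<bar>1\<bar> ^ DIM(real^2))) *\<^sub>R I) ((\<lambda>x. (1 / 1) *\<^sub>R x + -((1 / 1) *\<^sub>R (t *\<^sub>R e))) ` ?Q)"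
      by (rule has_integral_affinity[OF I]) simp
    then have I2: "((\<lambda>x. \<phi> (x + t *\<^sub>R e)) has_integral I) ((\<lambda>x. x - t *\<^sub>R e) ` ?Q)" by simp
    have "integral ?Q (\<lambda>x. \<phi> (x + t *\<^sub>R e)) = integral ((\<lambda>x. x - t *\<^sub>R e) ` ?Q) (\<lambda>x. \<phi> (x + t *\<^sub>R e))"
    proof (rule integral_transfer[where S="(\<lambda>x. x - t *\<^sub>R e) ` K"])
      show "\<forall>x. x \<notin> (\<lambda>x. x - t *\<^sub>R e) ` K \<longrightarrow> \<phi> (x + t *\<^sub>R e) = 0"
      proof (intro allI impI)
        fix x assume "x \<notin> (\<lambda>x. x - t *\<^sub>R e) ` K"
        then have "x + t *\<^sub>R e \<notin> K" by (metis add_diff_cancel image_eqI)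
        then show "\<phi> (x + t *\<^sub>R e) = 0" using K by blast
      qed
      show "(\<lambda>x. x - t *\<^sub>R e) ` K \<subseteq> ?Q"
      proof
        fix z assume "z \<in> (\<lambda>x. x - t *\<^sub>R e) ` K"
        then obtain y where y: "y \<in> K" "z = y - t *\<^sub>R e" by blast
        have "norm z \<le> norm y + norm (t *\<^sub>R e)" unfolding y(2) by (rule norm_triangle_ineq4)
        also have "\<dots> < 1 + 1" using y K t ne by (intro add_less_le_mono) auto
        finally show "z \<in> ?Q" using ballQ by auto
      qed
      show "(\<lambda>x. x - t *\<^sub>R e) ` K \<subseteq> (\<lambda>x. x - t *\<^sub>R e) ` ?Q"
        by (rule image_mono[OF KQ])
    qed
    with I2 have intT: "integral ?Q (\<lambda>x. \<phi> (x + t *\<^sub>R e)) = I" by (simp add: integral_unique)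
    have c2: "continuous_on UNIV (\<lambda>x. \<phi> (x + t *\<^sub>R e))"
      by (rule continuous_on_compose2[OF cphi]) (auto intro!: continuous_intros)
    have i2: "(\<lambda>x. \<phi> (x + t *\<^sub>R e)) integrable_on ?Q" using c2 continuous_on_subset integrable_continuous by blast
    have iD: "(\<lambda>x. D\<phi> x $ i) integrable_on ?Q" using cDi continuous_on_subset integrable_continuous by blast
    define R where "R x = \<phi> (x + t *\<^sub>R e) - \<phi> x - t * D\<phi> x $ i" for x
    have iR: "R integrable_on ?Q" unfolding R_def
      by (intro integrable_diff i2 int_phi integrable_on_mult_right iD)
    have intR: "integral ?Q R = - t * J"
    proof -
      have "integral ?Q R = integral ?Q (\<lambda>x. \<phi> (x + t *\<^sub>R e) - \<phi> x) - integral ?Q (\<lambda>x. t * D\<phi> x $ i)"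
        unfolding R_def by (rule integral_diff[OF integrable_diff[OF i2 int_phi] integrable_on_mult_right[OF iD]])
      also have "\<dots> = (integral ?Q (\<lambda>x. \<phi> (x + t *\<^sub>R e)) - integral ?Q \<phi>) - t * J"
        unfolding J_def integral_mult_right integral_diff[OF i2 int_phi] ..
      also have "\<dots> = - t * J" using intT integral_unique[OF I] by simp
      finally show ?thesis .
    qed
    have bnd: "norm (R x) \<le> t * \<epsilon>" if x: "x \<in> ?Q" for x
    proof -
      define g where "g \<tau> = \<phi> (x + \<tau> *\<^sub>R e)" for \<tau>
      have dg: "(g has_real_derivative D\<phi> (x + \<tau> *\<^sub>R e) $ i) (at \<tau>)" for \<tau>
      proof -
        have "((\<lambda>\<tau>. x + \<tau> *\<^sub>R e) has_derivative (\<lambda>h. h *\<^sub>R e)) (at \<tau>)"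
          by (auto intro!: derivative_eq_intros)
        from has_derivative_compose[OF this dphi]
        have "(g has_derivative (\<lambda>h. D\<phi> (x + \<tau> *\<^sub>R e) \<bullet> (h *\<^sub>R e))) (at \<tau>)"
          unfolding g_def o_def by simp
        moreover have "(\<lambda>h. D\<phi> (x + \<tau> *\<^sub>R e) \<bullet> (h *\<^sub>R e)) = (*) (D\<phi> (x + \<tau> *\<^sub>R e) $ i)"
          unfolding e_def by (auto simp: inner_axis)
        ultimately show ?thesis by (simp add: has_field_derivative_def)
      qed
      obtain z where z: "0 < z" "z < t" "g t - g 0 = (t - 0) * D\<phi> (x + z *\<^sub>R e) $ i"
        using MVT2[OF t(1), of g "\<lambda>\<tau>. D\<phi> (x + \<tau> *\<^sub>R e) $ i"] dg by blast
      have "R x = t * (D\<phi> (x + z *\<^sub>R e) $ i - D\<phi> x $ i)"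
        using z unfolding R_def g_def by (simp add: algebra_simps)
      also have "norm \<dots> = t * \<bar>(D\<phi> (x + z *\<^sub>R e) - D\<phi> x) $ i\<bar>" using t by (simp add: abs_mult)
      also have "\<dots> \<le> t * norm (D\<phi> (x + z *\<^sub>R e) - D\<phi> x)"
        using t by (intro mult_left_mono component_le_norm_cart) auto
      also have "\<dots> \<le> t * \<epsilon>"
      proof -
        have x5: "x \<in> cball 0 5" using Qn[OF x] by simp
        have "norm (x + z *\<^sub>R e) \<le> norm x + norm (z *\<^sub>R e)" by (rule norm_triangle_ineq)
        also have "\<dots> \<le> 4 + 1" using Qn[OF x] z t ne by (intro add_mono) auto
        finally have y5: "x + z *\<^sub>R e \<in> cball 0 5" by simp
        have "dist (x + z *\<^sub>R e) x < d" using z t ne by (simp add: dist_norm)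
        then have "dist (D\<phi> (x + z *\<^sub>R e)) (D\<phi> x) < \<epsilon>" using d x5 y5 by blast
        then show ?thesis using t by (intro mult_left_mono) (auto simp: dist_norm)
      qed
      finally show ?thesis .
    qed
    have "norm (integral ?Q R) \<le> t * \<epsilon> * Henstock_Kurzweil_Integration.content ?Q"
      by (rule has_integral_bound[OF _ integrable_integral[OF iR]]) (use t eps bnd in auto)
    then have "t * \<bar>J\<bar> \<le> t * (\<epsilon> * Henstock_Kurzweil_Integration.content ?Q)" using intR t by (simp add: abs_mult)
    then show ?thesis using t by simp
  qed
  have "J = 0"
  proof (cases "J = 0")
    case False
    define c where "c = Henstock_Kurzweil_Integration.content ?Q"
    have c0: "c \<ge> 0" unfolding c_def by simp
    have "\<bar>J\<bar> \<le> (\<bar>J\<bar> / (2 * (c + 1))) * c" using key[of "\<bar>J\<bar> / (2 * (c + 1))"] False c0 unfolding c_def by simp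
    also have "\<dots> = (\<bar>J\<bar> / 2) * (c / (c + 1))" by simp
    also have "\<dots> \<le> (\<bar>J\<bar> / 2) * 1" using c0 by (intro mult_left_mono) auto
    finally show ?thesis by simp
  qed
  then show ?thesis using J_eq by simp
qed
lemma absint_sub:
  fixes f :: "real^2 \<Rightarrow> 'b::euclidean_space"
  assumes "f absolutely_integrable_on A" "B \<in> sets lebesgue" "B \<subseteq> A"
  shows "f absolutely_integrable_on B"
  using assms set_integrable_subset by blast

lemma powr_le_1_plus:
  fixes y :: real assumes "0 \<le> y" "0 \<le> a" "a \<le> q" shows "y powr a \<le> 1 + y powr q"
proof (cases "y \<le> 1")
  case True then have "y powr a \<le> 1" using assms by (intro powr_le1) auto
  moreover have "0 \<le> y powr q" by simp
  ultimately show ?thesis by linarith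
next
  case False then have "y powr a \<le> y powr q" using assms by (intro powr_mono) auto
  then show ?thesis by simp
qed

lemma powr_mult_self:
  fixes y :: real assumes "0 \<le> y" "q > 1" shows "y powr (q - 1) * y = y powr q"
proof (cases "y = 0")
  case True then show ?thesis by simp
next
  case False
  have "y powr (q - 1) * y = y powr (q - 1) * y powr 1" by (simp only: powr_one[OF assms(1)])
  also have "\<dots> = y powr q" by (simp only: powr_add[symmetric]) simp
  finally show ?thesis .
qed

lemma absint_ae_bound:
  fixes h :: "real^2 \<Rightarrow> 'b::euclidean_space"
  assumes hm: "h measurable_on S" and S: "S \<in> sets lebesgue" and N: "negligible N" and g: "g integrable_on S"
    and bnd: "\<And>x. x \<in> S - N \<Longrightarrow> norm (h x) \<le> g x" and g0: "\<And>x. x \<in> S \<Longrightarrow> 0 \<le> g x"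
  shows "h absolutely_integrable_on S"
proof -
  define h0 where "h0 x = (if x \<in> N then 0 else h x)" for x
  have "h0 measurable_on S" by (rule measurable_on_spike[OF hm N]) (simp add: h0_def)
  then have "h0 \<in> borel_measurable (lebesgue_on S)" using measurable_on_iff_borel_measurable[OF S] by blast
  then have "h0 absolutely_integrable_on S"
  proof (rule measurable_bounded_by_integrable_imp_absolutely_integrable[OF _ S g])
    fix x assume "x \<in> S"
    then show "norm (h0 x) \<le> g x" using bnd g0 by (cases "x \<in> N") (simp_all add: h0_def)
  qed
  then show ?thesis by (rule absolutely_integrable_spike[OF _ N]) (simp add: h0_def)
qed

lemma scaled_test:
  fixes \<psi> :: "real^2 \<Rightarrow> real"
  assumes T: "test_fun (ball 0 1) \<psi> D\<psi>" and s: "0 < s" "s \<le> 1"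
  shows "test_fun (ball 0 1) (\<lambda>y. \<psi> (y /\<^sub>R s)) (\<lambda>y. (1/s) *\<^sub>R D\<psi> (y /\<^sub>R s))"
    and "\<exists>K. K \<subseteq> ball 0 s \<and> (\<forall>y. y \<notin> K \<longrightarrow> \<psi> (y /\<^sub>R s) = 0 \<and> D\<psi> (y /\<^sub>R s) = 0)"
proof -
  obtain K M where K: "compact K" "K \<subseteq> ball 0 1" "\<forall>x. x \<notin> K \<longrightarrow> \<psi> x = 0" "\<forall>x. x \<notin> K \<longrightarrow> D\<psi> x = 0"
     and M: "\<forall>x. norm (D\<psi> x) \<le> M" "\<forall>x. \<bar>\<psi> x\<bar> \<le> M"
     and cpsi: "continuous_on UNIV \<psi>" and cD: "continuous_on UNIV D\<psi>" by (rule test_fun_bounds[OF T])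
  have dpsi: "\<And>x. (\<psi> has_derivative (\<lambda>h. D\<psi> x \<bullet> h)) (at x)" using T unfolding test_fun_def by blast
  define K' where "K' = (\<lambda>x. s *\<^sub>R x) ` K"
  have K'c: "compact K'" unfolding K'_def by (rule compact_scaling[OF K(1)])
  have K's: "K' \<subseteq> ball 0 s"
  proof
    fix y assume "y \<in> K'"
    then obtain x where x: "x \<in> K" "y = s *\<^sub>R x" unfolding K'_def by blast
    have "norm x < 1" using x K(2) by auto
    then have "s * norm x < s * 1" using s by (intro mult_strict_left_mono) auto
    then show "y \<in> ball 0 s" using x s by simp
  qed
  have sB: "ball (0::real^2) s \<subseteq> ball 0 1" using s by (intro subset_ball)
  have out: "y /\<^sub>R s \<notin> K" if "y \<notin> K'" for y
  proof
    assume "y /\<^sub>R s \<in> K"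
    then have "s *\<^sub>R (y /\<^sub>R s) \<in> K'" unfolding K'_def by blast
    then show False using that s by simp
  qed
  show "\<exists>K. K \<subseteq> ball 0 s \<and> (\<forall>y. y \<notin> K \<longrightarrow> \<psi> (y /\<^sub>R s) = 0 \<and> D\<psi> (y /\<^sub>R s) = 0)"
    using K's out K(3,4) by blast
  have lin: "linear (\<lambda>y::real^2. y /\<^sub>R s)"
    using bounded_linear_scaleR_right by (rule bounded_linear.linear)
  have der: "((\<lambda>y. \<psi> (y /\<^sub>R s)) has_derivative (\<lambda>h. ((1/s) *\<^sub>R D\<psi> (y /\<^sub>R s)) \<bullet> h)) (at y)" for y
  proof -
    have "((\<lambda>y. \<psi> (y /\<^sub>R s)) has_derivative (\<lambda>h. D\<psi> (y /\<^sub>R s) \<bullet> (h /\<^sub>R s))) (at y)"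
      using has_derivative_compose[OF linear_imp_has_derivative[OF lin] dpsi] by simp
    moreover have "(\<lambda>h. D\<psi> (y /\<^sub>R s) \<bullet> (h /\<^sub>R s)) = (\<lambda>h. ((1/s) *\<^sub>R D\<psi> (y /\<^sub>R s)) \<bullet> h)"
      by (simp add: divide_inverse)
    ultimately show ?thesis by simp
  qed
  have cD': "continuous_on UNIV (\<lambda>y. (1/s) *\<^sub>R D\<psi> (y /\<^sub>R s))"
  proof -
    have "continuous_on UNIV (\<lambda>y. D\<psi> (y /\<^sub>R s))"
      by (rule continuous_on_compose2[OF cD]) (auto intro!: continuous_intros)
    then show ?thesis by (intro continuous_intros)
  qed
  have "K' \<subseteq> ball 0 1" using K's sB by blast
  then show "test_fun (ball 0 1) (\<lambda>y. \<psi> (y /\<^sub>R s)) (\<lambda>y. (1/s) *\<^sub>R D\<psi> (y /\<^sub>R s))"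
    unfolding test_fun_def using der cD' K'c out K(3) by blast
qed
lemma meas_m1:
  fixes G :: "real^2 \<Rightarrow> real^2" and \<phi> :: "real^2 \<Rightarrow> real"
  assumes [measurable]: "G \<in> borel_measurable (lebesgue_on S)" "\<phi> \<in> borel_measurable (lebesgue_on S)"
  shows "(\<lambda>x. (G x \<bullet> axis i 1) * \<phi> x) \<in> borel_measurable (lebesgue_on S)"
  by measurable

lemma meas_m2:
  fixes G :: "real^2 \<Rightarrow> real^2" and D :: "real^2 \<Rightarrow> real^2"
  assumes [measurable]: "G \<in> borel_measurable (lebesgue_on S)" "D \<in> borel_measurable (lebesgue_on S)"
  shows "(\<lambda>x. norm (G x) powr (p - 2) * (G x \<bullet> D x)) \<in> borel_measurable (lebesgue_on S)"
  by measurable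

lemma meas_m3:
  fixes f :: "real^2 \<Rightarrow> real" and \<phi> :: "real^2 \<Rightarrow> real"
  assumes [measurable]: "f \<in> borel_measurable (lebesgue_on S)" "\<phi> \<in> borel_measurable (lebesgue_on S)"
  shows "(\<lambda>x. f x * \<phi> x) \<in> borel_measurable (lebesgue_on S)"
  by measurable
lemma vec_nth_inner: "(x::real^2) $ i = x \<bullet> axis i 1"
  by (simp add: inner_axis)

lemma transform:
  fixes u :: "real^2 \<Rightarrow> real" and G :: "real^2 \<Rightarrow> real^2" and f :: "real^2 \<Rightarrow> real" and c :: real
  assumes p: "p > 2" and ws: "weak_sol_plap p (ball 0 1) u G f" and cu: "continuous_on (ball 0 1) u"
    and ub: "\<forall>x\<in>ball 0 1. \<bar>u x\<bar> \<le> 1" and fb: "Linf_bound (ball 0 1) f \<delta>" and d: "\<delta> > 0"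
    and s: "0 < s" "s \<le> 1" and a: "a > 0" and kle: "(a * s) powr (p-1) * s \<le> 1"
  defines "v \<equiv> \<lambda>x. a * (u (s *\<^sub>R x) - c)" and "Gv \<equiv> \<lambda>x. (a * s) *\<^sub>R G (s *\<^sub>R x)"
    and "fv \<equiv> \<lambda>x. ((a * s) powr (p-1) * s) * f (s *\<^sub>R x)"
  shows "weak_sol_plap p (ball 0 1) v Gv fv \<and> continuous_on (ball 0 1) v \<and> Linf_bound (ball 0 1) fv \<delta>"
proof -
  let ?B = "ball (0::real^2) 1" and ?Bs = "ball (0::real^2) s"
  define k where "k = (a * s) powr (p-1) * s"
  have kpos: "0 < k" using a s by (simp add: k_def)
  have k1: "k \<le> 1" using kle by (simp add: k_def)
  have fv_k: "fv = (\<lambda>x. k * f (s *\<^sub>R x))" unfolding fv_def k_def ..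
  have SB: "?B \<in> sets lebesgue" and SBs: "?Bs \<in> sets lebesgue" by (simp_all add: fmeasurableD)
  have BsB: "?Bs \<subseteq> ?B" using s by (intro subset_ball)
  have scB: "s *\<^sub>R x \<in> ?Bs" if "x \<in> ?B" for x
  proof -
    have "norm x < 1" using that by simp
    then have "s * norm x < s * 1" using s by (intro mult_strict_left_mono) auto
    then show ?thesis using s by simp
  qed
  have scB1: "s *\<^sub>R x \<in> ?B" if "x \<in> ?B" for x using scB[OF that] BsB by blast
  have lin: "linear (\<lambda>x::real^2. s *\<^sub>R x)" using bounded_linear_scaleR_right by (rule bounded_linear.linear)
  have det: "det (matrix (\<lambda>x::real^2. s *\<^sub>R x)) \<noteq> 0" using det_matrix_scaleR[of s, where 'n=2] s by simp
  from ws have um: "u measurable_on ?B" and Gm: "G measurable_on ?B" and Gp: "(\<lambda>x. norm (G x) powr p) integrable_on ?B"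
    and wg: "\<And>\<phi> D\<phi>. test_fun ?B \<phi> D\<phi> \<Longrightarrow> (\<forall>i. integral ?B (\<lambda>x. u x * D\<phi> x $ i) = - integral ?B (\<lambda>x. G x $ i * \<phi> x))"
    and eqn: "\<And>\<phi> D\<phi>. test_fun ?B \<phi> D\<phi> \<Longrightarrow> integral ?B (\<lambda>x. norm (G x) powr (p - 2) * (G x \<bullet> D\<phi> x)) = integral ?B (\<lambda>x. f x * \<phi> x)"
    unfolding weak_sol_plap_def sobolev_W1p_def weak_gradient_def by blast+
  from fb have fm: "f measurable_on ?B" and fneg: "negligible {x \<in> ?B. \<bar>f x\<bar> > \<delta>}" unfolding Linf_bound_def by blast+
  have GM: "G \<in> borel_measurable (lebesgue_on ?B)" using Gm measurable_on_iff_borel_measurable[OF SB] by blast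
  have FM: "f \<in> borel_measurable (lebesgue_on ?B)" using fm measurable_on_iff_borel_measurable[OF SB] by blast
  define g where "g x = 1 + norm (G x) powr p" for x
  have gi: "g integrable_on ?B" unfolding g_def by (intro integrable_add integrable_on_const Gp) simp
  have g0: "0 \<le> g x" for x unfolding g_def by (simp add: add_nonneg_nonneg)
  have Gg: "norm (G x) \<le> g x" for x using powr_le_1_plus[of "norm (G x)" 1 p] p by (simp add: g_def)
  have GA: "G absolutely_integrable_on ?B"
    by (rule measurable_bounded_by_integrable_imp_absolutely_integrable[OF GM SB gi]) (rule Gg)
  have GpA: "(\<lambda>x. norm (G x) powr p) absolutely_integrable_on ?B"
    by (rule nonnegative_absolutely_integrable_1[OF Gp]) simp
  have fA: "f absolutely_integrable_on ?B"
    by (rule absint_ae_bound[OF fm SB fneg integrable_on_const[OF lmeasurable_ball, where c=\<delta>]]) (use d in auto)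
  have cus: "continuous_on ?B (\<lambda>x. u (s *\<^sub>R x))"
  proof (rule continuous_on_compose2[OF cu])
    show "continuous_on ?B (\<lambda>x. s *\<^sub>R x)" by (intro continuous_intros)
    show "(\<lambda>x. s *\<^sub>R x) ` ?B \<subseteq> ?B" using scB1 by blast
  qed
  have cv: "continuous_on ?B v" unfolding v_def by (intro continuous_intros cus)
  have usb: "\<bar>u (s *\<^sub>R x)\<bar> \<le> 1" if "x \<in> ?B" for x using ub scB1[OF that] by blast
  have vb: "\<bar>v x\<bar> \<le> a * (1 + \<bar>c\<bar>)" if "x \<in> ?B" for x
  proof -
    have "\<bar>v x\<bar> = a * \<bar>u (s *\<^sub>R x) - c\<bar>" using a by (simp add: v_def abs_mult)
    also have "\<dots> \<le> a * (1 + \<bar>c\<bar>)" using usb[OF that] a by (intro mult_left_mono) auto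
    finally show ?thesis .
  qed
  have vm: "v measurable_on ?B"
    using continuous_imp_measurable_on_sets_lebesgue[OF cv SB] measurable_on_iff_borel_measurable[OF SB] by blast
  have vp: "(\<lambda>x. \<bar>v x\<bar> powr p) integrable_on ?B"
  proof -
    have "continuous_on ?B (\<lambda>x. \<bar>v x\<bar> powr p)"
      by (rule continuous_on_powr') (use p in \<open>auto intro!: continuous_intros cv\<close>)
    moreover have "\<bar>\<bar>v x\<bar> powr p\<bar> \<le> (a * (1 + \<bar>c\<bar>)) powr p" if "x \<in> ?B" for x
      using vb[OF that] p by (simp add: powr_mono2)
    ultimately have "(\<lambda>x. \<bar>v x\<bar> powr p) absolutely_integrable_on ?B"
      by (intro absint_bounded_cont) auto
    then show ?thesis unfolding absolutely_integrable_on_def by blast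
  qed
  have GsA: "(\<lambda>x. G (s *\<^sub>R x)) absolutely_integrable_on ?B"
  proof -
    have "G absolutely_integrable_on (\<lambda>x. s *\<^sub>R x) ` ?B"
      unfolding scale_ball[OF s(1)] by (rule absint_sub[OF GA SBs BsB])
    then show ?thesis using absolutely_integrable_on_linear_image[OF lin, where f=G and S="?B"] det by (simp add: o_def)
  qed
  have GvA: "Gv absolutely_integrable_on ?B" unfolding Gv_def by (rule absolutely_integrable_scaleR_left[OF GsA])
  have GvM: "Gv measurable_on ?B"
    using GvA absolutely_integrable_measurable[OF SB] measurable_on_iff_borel_measurable[OF SB] by blast
  have GvP: "(\<lambda>x. norm (Gv x) powr p) integrable_on ?B"
  proof -
    have "(\<lambda>x. (\<lambda>y. norm (G y) powr p) (s *\<^sub>R x)) absolutely_integrable_on ?B"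
      by (rule cov_scale(1)[OF s(1) absint_sub[OF GpA SBs BsB]])
    then have "(\<lambda>x. norm (G (s *\<^sub>R x)) powr p) integrable_on ?B"
      unfolding absolutely_integrable_on_def by simp
    then have "(\<lambda>x. (a * s) powr p * norm (G (s *\<^sub>R x)) powr p) integrable_on ?B"
      by (rule integrable_on_mult_right)
    moreover have "norm (Gv x) powr p = (a * s) powr p * norm (G (s *\<^sub>R x)) powr p" for x
      using a s by (simp add: Gv_def powr_mult abs_mult)
    ultimately show ?thesis by simp
  qed
  have fsA: "(\<lambda>x. f (s *\<^sub>R x)) absolutely_integrable_on ?B"
    by (rule cov_scale(1)[OF s(1) absint_sub[OF fA SBs BsB]])
  have fvA: "fv absolutely_integrable_on ?B"
    unfolding fv_k using absolutely_integrable_scaleR_left[OF fsA, of k] by simp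
  have fvM: "fv measurable_on ?B"
    using fvA absolutely_integrable_measurable[OF SB] measurable_on_iff_borel_measurable[OF SB] by blast
  have fvneg: "negligible {x \<in> ?B. \<bar>fv x\<bar> > \<delta>}"
  proof (rule negligible_subset)
    have "(\<lambda>y::real^2. (1/s) *\<^sub>R y) differentiable_on {x \<in> ?B. \<bar>f x\<bar> > \<delta>}"
      by (rule linear_imp_differentiable_on) (rule bounded_linear.linear[OF bounded_linear_scaleR_right])
    then show "negligible ((\<lambda>y. (1/s) *\<^sub>R y) ` {x \<in> ?B. \<bar>f x\<bar> > \<delta>})"
      by (rule negligible_differentiable_image_negligible[OF order_refl fneg])
    show "{x \<in> ?B. \<bar>fv x\<bar> > \<delta>} \<subseteq> (\<lambda>y. (1/s) *\<^sub>R y) ` {x \<in> ?B. \<bar>f x\<bar> > \<delta>}"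
    proof
      fix x assume x: "x \<in> {x \<in> ?B. \<bar>fv x\<bar> > \<delta>}"
      then have xB: "x \<in> ?B" and gt: "\<bar>k * f (s *\<^sub>R x)\<bar> > \<delta>" by (auto simp: fv_k)
      have "\<bar>k * f (s *\<^sub>R x)\<bar> \<le> \<bar>f (s *\<^sub>R x)\<bar>"
        using kpos k1 by (simp add: abs_mult mult_left_le_one_le)
      then have "s *\<^sub>R x \<in> {x \<in> ?B. \<bar>f x\<bar> > \<delta>}" using gt scB1[OF xB] by simp
      moreover have "x = (1/s) *\<^sub>R (s *\<^sub>R x)" using s by simp
      ultimately show "x \<in> (\<lambda>y. (1/s) *\<^sub>R y) ` {x \<in> ?B. \<bar>f x\<bar> > \<delta>}" by blast
    qed
  qed
  have Lv: "Linf_bound ?B fv \<delta>" unfolding Linf_bound_def using fvM fvneg by blast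
  have wgv: "weak_gradient ?B v Gv"
    unfolding weak_gradient_def
  proof (intro allI impI)
    fix \<psi> D\<psi> i assume T: "test_fun ?B \<psi> D\<psi>"
    obtain K M where K: "compact K" "K \<subseteq> ?B" "\<forall>x. x \<notin> K \<longrightarrow> \<psi> x = 0" "\<forall>x. x \<notin> K \<longrightarrow> D\<psi> x = 0"
       and M: "\<forall>x. norm (D\<psi> x) \<le> M" "\<forall>x. \<bar>\<psi> x\<bar> \<le> M"
       and cpsi: "continuous_on UNIV \<psi>" and cD: "continuous_on UNIV D\<psi>" by (rule test_fun_bounds[OF T])
    define \<phi> where "\<phi> y = \<psi> (y /\<^sub>R s)" for y
    define D\<phi> where "D\<phi> y = (1/s) *\<^sub>R D\<psi> (y /\<^sub>R s)" for y
    have TF: "test_fun ?B \<phi> D\<phi>" unfolding \<phi>_def[abs_def] D\<phi>_def[abs_def] by (rule scaled_test(1)[OF T s])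
    obtain K' where K': "K' \<subseteq> ?Bs" "\<forall>y. y \<notin> K' \<longrightarrow> \<psi> (y /\<^sub>R s) = 0 \<and> D\<psi> (y /\<^sub>R s) = 0"
      using scaled_test(2)[OF T s] by blast
    have K'B: "K' \<subseteq> ?B" using K' BsB by blast
    obtain K2 M2 where "compact K2" "K2 \<subseteq> ?B" "\<forall>x. x \<notin> K2 \<longrightarrow> \<phi> x = 0" "\<forall>x. x \<notin> K2 \<longrightarrow> D\<phi> x = 0"
       and M2: "\<forall>x. norm (D\<phi> x) \<le> M2" "\<forall>x. \<bar>\<phi> x\<bar> \<le> M2"
       and cphi: "continuous_on UNIV \<phi>" and cDphi: "continuous_on UNIV D\<phi>"
      by (rule test_fun_bounds[OF TF])
    have M2n: "0 \<le> M2" using abs_ge_zero[of "\<phi> 0"] spec[OF M2(2), of 0] by linarith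
    have phis: "\<phi> (s *\<^sub>R x) = \<psi> x" for x using s by (simp add: \<phi>_def)
    have Dphis: "D\<psi> x = s *\<^sub>R D\<phi> (s *\<^sub>R x)" for x using s by (simp add: D\<phi>_def)
    have Dpsii: "\<bar>D\<psi> x $ i\<bar> \<le> M" for x using component_le_norm_cart[of "D\<psi> x" i] M(1) by (meson order_trans)
    have Dphii: "\<bar>D\<phi> x $ i\<bar> \<le> M2" for x using component_le_norm_cart[of "D\<phi> x" i] M2(1) by (meson order_trans)
    have i1: "(\<lambda>x. u (s *\<^sub>R x) * D\<psi> x $ i) integrable_on ?B"
    proof -
      have "(\<lambda>x. u (s *\<^sub>R x) * D\<psi> x $ i) absolutely_integrable_on ?B"
      proof (rule absint_bounded_cont)
        show "continuous_on ?B (\<lambda>x. u (s *\<^sub>R x) * D\<psi> x $ i)"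
          by (intro continuous_intros cus continuous_on_subset[OF cD]) simp
        show "\<bar>u (s *\<^sub>R x) * D\<psi> x $ i\<bar> \<le> 1 * M" if "x \<in> ?B" for x
          unfolding abs_mult by (rule mult_mono[OF usb[OF that] Dpsii[of x] zero_le_one abs_ge_zero])
      qed simp
      then show ?thesis unfolding absolutely_integrable_on_def by blast
    qed
    have i2: "(\<lambda>x. D\<psi> x $ i) integrable_on ?B"
    proof -
      have "(\<lambda>x. D\<psi> x $ i) absolutely_integrable_on ?B"
      proof (rule absint_bounded_cont)
        show "continuous_on ?B (\<lambda>x. D\<psi> x $ i)"
          by (intro continuous_intros continuous_on_subset[OF cD]) simp
        show "\<bar>D\<psi> x $ i\<bar> \<le> M" if "x \<in> ?B" for x by (rule Dpsii)
      qed simp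
      then show ?thesis unfolding absolutely_integrable_on_def by blast
    qed
    define h1 where "h1 y = u y * D\<phi> y $ i" for y
    have h1A: "h1 absolutely_integrable_on ?Bs"
    proof (rule absint_bounded_cont)
      show "continuous_on ?Bs h1" unfolding h1_def
        by (intro continuous_intros continuous_on_subset[OF cu BsB] continuous_on_subset[OF cDphi]) simp
      show "\<bar>h1 y\<bar> \<le> 1 * M2" if "y \<in> ?Bs" for y
      proof -
        have "\<bar>u y\<bar> \<le> 1" using ub BsB that by blast
        then show ?thesis unfolding h1_def abs_mult by (rule mult_mono[OF _ Dphii[of y] zero_le_one abs_ge_zero])
      qed
    qed simp
    define h2 where "h2 y = G y $ i * \<phi> y" for y
    have h2A: "h2 absolutely_integrable_on ?Bs"
    proof -
      have PM: "\<phi> \<in> borel_measurable (lebesgue_on ?B)"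
        by (rule continuous_imp_measurable_on_sets_lebesgue[OF continuous_on_subset[OF cphi] SB]) simp
      have "(\<lambda>x. (G x \<bullet> axis i 1) * \<phi> x) \<in> borel_measurable (lebesgue_on ?B)"
        by (rule meas_m1[OF GM PM])
      then have h2M: "h2 \<in> borel_measurable (lebesgue_on ?B)" unfolding h2_def[abs_def] vec_nth_inner .
      have "h2 absolutely_integrable_on ?B"
      proof (rule measurable_bounded_by_integrable_imp_absolutely_integrable[OF h2M SB integrable_on_mult_right[OF gi, of M2]])
        fix x assume "x \<in> ?B"
        have "norm (h2 x) \<le> norm (G x) * M2" unfolding h2_def real_norm_def abs_mult
          by (rule mult_mono[OF component_le_norm_cart[of "G x" i] spec[OF M2(2), of x] norm_ge_zero abs_ge_zero])
        also have "\<dots> \<le> g x * M2" by (rule mult_right_mono[OF Gg M2n])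
        finally show "norm (h2 x) \<le> M2 * g x" by (simp add: mult.commute)
      qed
      then show ?thesis by (rule absint_sub[OF _ SBs BsB])
    qed
    have h1z: "\<forall>y. y \<notin> K' \<longrightarrow> h1 y = 0" using K'(2) by (simp add: h1_def D\<phi>_def)
    have h2z: "\<forall>y. y \<notin> K' \<longrightarrow> h2 y = 0" using K'(2) by (simp add: h2_def \<phi>_def)
    define J2 where "J2 = integral ?B (\<lambda>x. G (s *\<^sub>R x) $ i * \<psi> x)"
    have "integral ?B (\<lambda>x. u (s *\<^sub>R x) * D\<psi> x $ i) = integral ?B (\<lambda>x. s * h1 (s *\<^sub>R x))"
      by (rule integral_cong) (simp add: h1_def Dphis)
    also have "\<dots> = s * (integral ?Bs h1 / s^2)" by (simp add: cov_scale(2)[OF s(1) h1A])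
    also have "integral ?Bs h1 = integral ?B h1" by (rule integral_transfer[OF h1z K'(1) K'B])
    also have "integral ?B h1 = - integral ?B h2" unfolding h1_def h2_def using wg[OF TF] by blast
    also have "integral ?B h2 = integral ?Bs h2" by (rule integral_transfer[OF h2z K'B K'(1)])
    also have "integral ?Bs h2 = s^2 * integral ?B (\<lambda>x. h2 (s *\<^sub>R x))" using cov_scale(2)[OF s(1) h2A] s by simp
    also have "integral ?B (\<lambda>x. h2 (s *\<^sub>R x)) = J2" unfolding J2_def by (rule integral_cong) (simp add: h2_def phis)
    finally have S3: "integral ?B (\<lambda>x. u (s *\<^sub>R x) * D\<psi> x $ i) = - s * J2" using s by (simp add: power2_eq_square)
    have "integral ?B (\<lambda>x. v x * D\<psi> x $ i) = integral ?B (\<lambda>x. a * (u (s *\<^sub>R x) * D\<psi> x $ i) - (a * c) * D\<psi> x $ i)"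
      by (rule integral_cong) (simp add: v_def algebra_simps)
    also have "\<dots> = a * integral ?B (\<lambda>x. u (s *\<^sub>R x) * D\<psi> x $ i) - (a * c) * integral ?B (\<lambda>x. D\<psi> x $ i)"
      by (simp add: integral_diff[OF integrable_on_mult_right[OF i1] integrable_on_mult_right[OF i2]])
    finally have E1: "integral ?B (\<lambda>x. v x * D\<psi> x $ i) = a * integral ?B (\<lambda>x. u (s *\<^sub>R x) * D\<psi> x $ i) - (a * c) * integral ?B (\<lambda>x. D\<psi> x $ i)" .
    have E2: "integral ?B (\<lambda>x. D\<psi> x $ i) = 0" by (rule int_partial_zero[OF T])
    have "(\<lambda>x. Gv x $ i * \<psi> x) = (\<lambda>x. (a * s) * (G (s *\<^sub>R x) $ i * \<psi> x))"
      by (simp add: Gv_def mult.assoc)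
    then have E3: "integral ?B (\<lambda>x. Gv x $ i * \<psi> x) = (a * s) * J2"
      unfolding J2_def by (simp only: integral_mult_right)
    show "integral ?B (\<lambda>x. v x * D\<psi> x $ i) = - integral ?B (\<lambda>x. Gv x $ i * \<psi> x)"
      unfolding E1 E2 E3 S3 by simp
  qed
  have eqv: "integral ?B (\<lambda>x. norm (Gv x) powr (p - 2) * (Gv x \<bullet> D\<psi> x)) = integral ?B (\<lambda>x. fv x * \<psi> x)"
    if T: "test_fun ?B \<psi> D\<psi>" for \<psi> D\<psi>
  proof -
    define \<phi> where "\<phi> y = \<psi> (y /\<^sub>R s)" for y
    define D\<phi> where "D\<phi> y = (1/s) *\<^sub>R D\<psi> (y /\<^sub>R s)" for y
    have TF: "test_fun ?B \<phi> D\<phi>" unfolding \<phi>_def[abs_def] D\<phi>_def[abs_def] by (rule scaled_test(1)[OF T s])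
    obtain K' where K': "K' \<subseteq> ?Bs" "\<forall>y. y \<notin> K' \<longrightarrow> \<psi> (y /\<^sub>R s) = 0 \<and> D\<psi> (y /\<^sub>R s) = 0"
      using scaled_test(2)[OF T s] by blast
    have K'B: "K' \<subseteq> ?B" using K' BsB by blast
    obtain K2 M2 where "compact K2" "K2 \<subseteq> ?B" "\<forall>x. x \<notin> K2 \<longrightarrow> \<phi> x = 0" "\<forall>x. x \<notin> K2 \<longrightarrow> D\<phi> x = 0"
       and M2: "\<forall>x. norm (D\<phi> x) \<le> M2" "\<forall>x. \<bar>\<phi> x\<bar> \<le> M2"
       and cphi: "continuous_on UNIV \<phi>" and cDphi: "continuous_on UNIV D\<phi>"
      by (rule test_fun_bounds[OF TF])
    have M2n: "0 \<le> M2" using abs_ge_zero[of "\<phi> 0"] spec[OF M2(2), of 0] by linarith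
    have phis: "\<phi> (s *\<^sub>R x) = \<psi> x" for x using s by (simp add: \<phi>_def)
    have Dphis: "D\<psi> x = s *\<^sub>R D\<phi> (s *\<^sub>R x)" for x using s by (simp add: D\<phi>_def)
    have PM: "\<phi> \<in> borel_measurable (lebesgue_on ?B)"
      by (rule continuous_imp_measurable_on_sets_lebesgue[OF continuous_on_subset[OF cphi] SB]) simp
    have DPM: "D\<phi> \<in> borel_measurable (lebesgue_on ?B)"
      by (rule continuous_imp_measurable_on_sets_lebesgue[OF continuous_on_subset[OF cDphi] SB]) simp
    define H where "H y = norm (G y) powr (p - 2) * (G y \<bullet> D\<phi> y)" for y
    have HA: "H absolutely_integrable_on ?Bs"
    proof -
      have HM: "H \<in> borel_measurable (lebesgue_on ?B)" unfolding H_def[abs_def] by (rule meas_m2[OF GM DPM])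
      have "H absolutely_integrable_on ?B"
      proof (rule measurable_bounded_by_integrable_imp_absolutely_integrable[OF HM SB integrable_on_mult_right[OF gi, of M2]])
        fix x assume "x \<in> ?B"
        have "norm (H x) = norm (G x) powr (p - 2) * \<bar>G x \<bullet> D\<phi> x\<bar>" by (simp add: H_def abs_mult)
        also have "\<dots> \<le> norm (G x) powr (p - 2) * (norm (G x) * M2)"
        proof (rule mult_left_mono)
          show "\<bar>G x \<bullet> D\<phi> x\<bar> \<le> norm (G x) * M2"
            using Cauchy_Schwarz_ineq2[of "G x" "D\<phi> x"] mult_left_mono[OF spec[OF M2(1), of x] norm_ge_zero[of "G x"]]
            by linarith
        qed simp
        also have "\<dots> = (norm (G x) powr (p - 2) * norm (G x)) * M2" by simp
        also have "norm (G x) powr (p - 2) * norm (G x) = norm (G x) powr (p - 1)"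
          using powr_mult_self[of "norm (G x)" "p - 1"] p by simp
        finally have e1: "norm (H x) \<le> norm (G x) powr (p - 1) * M2" .
        have e2: "norm (G x) powr (p - 1) \<le> g x"
          unfolding g_def using p by (intro powr_le_1_plus) auto
        show "norm (H x) \<le> M2 * g x"
          using e1 mult_right_mono[OF e2 M2n] by (simp add: mult.commute)
      qed
      then show ?thesis by (rule absint_sub[OF _ SBs BsB])
    qed
    define h3 where "h3 y = f y * \<phi> y" for y
    have h3A: "h3 absolutely_integrable_on ?Bs"
    proof -
      have "(\<lambda>x. f x * \<phi> x) \<in> borel_measurable (lebesgue_on ?B)" by (rule meas_m3[OF FM PM])
      then have "h3 measurable_on ?B" unfolding h3_def[abs_def] using measurable_on_iff_borel_measurable[OF SB] by blast
      then have "h3 absolutely_integrable_on ?B"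
      proof (rule absint_ae_bound[OF _ SB fneg integrable_on_const[OF lmeasurable_ball, where c="\<delta> * M2"]])
        fix x assume "x \<in> ?B - {x \<in> ?B. \<bar>f x\<bar> > \<delta>}"
        then have "\<bar>f x\<bar> \<le> \<delta>" by auto
        then show "norm (h3 x) \<le> \<delta> * M2" unfolding h3_def real_norm_def abs_mult
          by (rule mult_mono[OF _ spec[OF M2(2), of x] _ abs_ge_zero]) (use d in auto)
      next
        show "0 \<le> \<delta> * M2" using d M2n by simp
      qed
      then show ?thesis by (rule absint_sub[OF _ SBs BsB])
    qed
    have Hz: "\<forall>y. y \<notin> K' \<longrightarrow> H y = 0" using K'(2) by (simp add: H_def D\<phi>_def)
    have h3z: "\<forall>y. y \<notin> K' \<longrightarrow> h3 y = 0" using K'(2) by (simp add: h3_def \<phi>_def)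
    have kk: "(a * s) powr (p - 1) = (a * s) powr (p - 2) * (a * s)"
      using powr_mult_self[of "a * s" "p - 1"] a s p by simp
    have pt: "norm (Gv x) powr (p - 2) * (Gv x \<bullet> D\<psi> x) = k * H (s *\<^sub>R x)" for x
    proof -
      have "norm (Gv x) = (a * s) * norm (G (s *\<^sub>R x))" using a s by (simp add: Gv_def)
      then have "norm (Gv x) powr (p - 2) = (a * s) powr (p - 2) * norm (G (s *\<^sub>R x)) powr (p - 2)"
        using a s by (simp add: powr_mult)
      moreover have "Gv x \<bullet> D\<psi> x = (a * s) * s * (G (s *\<^sub>R x) \<bullet> D\<phi> (s *\<^sub>R x))"
        by (subst Dphis) (simp add: Gv_def)
      ultimately show ?thesis unfolding k_def kk H_def by (simp add: algebra_simps)
    qed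
    have F1: "integral ?B (\<lambda>x. norm (Gv x) powr (p - 2) * (Gv x \<bullet> D\<psi> x)) = integral ?B (\<lambda>x. k * H (s *\<^sub>R x))"
      using pt by simp
    have F2: "integral ?B (\<lambda>x. k * H (s *\<^sub>R x)) = k * (integral ?Bs H / s^2)" by (simp add: cov_scale(2)[OF s(1) HA])
    have F3: "integral ?Bs H = integral ?B H" by (rule integral_transfer[OF Hz K'(1) K'B])
    have F4: "integral ?B H = integral ?B h3" unfolding H_def[abs_def] h3_def[abs_def] by (rule eqn[OF TF])
    have F5: "integral ?B h3 = integral ?Bs h3" by (rule integral_transfer[OF h3z K'B K'(1)])
    have F6: "integral ?Bs h3 / s^2 = integral ?B (\<lambda>x. h3 (s *\<^sub>R x))" by (simp add: cov_scale(2)[OF s(1) h3A])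
    have "(\<lambda>x. fv x * \<psi> x) = (\<lambda>x. k * h3 (s *\<^sub>R x))"
      by (simp add: h3_def phis fv_k mult.assoc)
    then have F7: "k * integral ?B (\<lambda>x. h3 (s *\<^sub>R x)) = integral ?B (\<lambda>x. fv x * \<psi> x)"
      by (simp only: integral_mult_right)
    show ?thesis unfolding F1 F2 F3 F4 F5 F6 F7 ..
  qed
  have "weak_sol_plap p ?B v Gv fv"
    unfolding weak_sol_plap_def sobolev_W1p_def using vm vp GvM GvP wgv eqv by blast
  then show ?thesis using cv Lv by blast
qed
lemma kle_lemma:
  fixes \<sigma> N p :: real
  assumes p: "p > 2" and \<sigma>: "\<sigma> > 0" and N: "\<sigma> powr (p / (p - 1)) \<le> N"
  shows "((1 / N) * \<sigma>) powr (p - 1) * \<sigma> \<le> 1"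
proof -
  let ?b = "p / (p - 1)"
  have sb: "0 < \<sigma> powr ?b" using \<sigma> by simp
  have N0: "0 < N" using sb N by linarith
  have "\<sigma> / N \<le> \<sigma> / \<sigma> powr ?b"
    by (rule divide_left_mono[OF N]) (use sb N0 \<sigma> in auto)
  then have "(1 / N) * \<sigma> \<le> \<sigma> / \<sigma> powr ?b" by simp
  then have "((1 / N) * \<sigma>) powr (p - 1) \<le> (\<sigma> / \<sigma> powr ?b) powr (p - 1)"
    using p N0 \<sigma> by (intro powr_mono2) auto
  also have "(\<sigma> / \<sigma> powr ?b) powr (p - 1) = \<sigma> powr (p - 1) / \<sigma> powr p"
  proof -
    have "(\<sigma> / \<sigma> powr ?b) powr (p - 1) = \<sigma> powr (p - 1) / (\<sigma> powr ?b) powr (p - 1)"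
      using \<sigma> by (simp add: powr_divide)
    also have "(\<sigma> powr ?b) powr (p - 1) = \<sigma> powr p" using p by (simp add: powr_powr)
    finally show ?thesis .
  qed
  finally have "((1 / N) * \<sigma>) powr (p - 1) * \<sigma> \<le> \<sigma> powr (p - 1) / \<sigma> powr p * \<sigma>"
    using \<sigma> by (intro mult_right_mono) auto
  also have "\<dots> = 1" using powr_mult_self[of \<sigma> p] \<sigma> p by simp
  finally show ?thesis .
qed

lemma pow_powr_swap:
  fixes lam b :: real assumes "lam > 0"
  shows "(lam ^ k) powr b = (lam powr b) ^ k"
proof -
  have "(lam ^ k) powr b = (lam powr real k) powr b" using assms by (simp add: powr_realpow)
  also have "\<dots> = (lam powr b) powr real k" by (rule powr_powr_swap)
  also have "\<dots> = (lam powr b) ^ k" using assms by (simp add: powr_realpow)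
  finally show ?thesis .
qed

theorem theorem4p3:
  fixes p \<delta>0 :: real
  assumes "p > 2" and "\<delta>0 > 0"
    and "\<exists>lam0. 0 < lam0 \<and> lam0 < 1/2 \<and> lemma41_prop p lam0 \<delta>0"
  shows "\<exists>C r0. C > 1 \<and> 0 < r0 \<and> r0 \<le> 1 \<and>
    (\<forall>u G f g0.
        weak_sol_plap p (ball 0 1) u G f \<and> continuous_on (ball 0 1) u \<and>
        (\<forall>x\<in>ball 0 1. \<bar>u x\<bar> \<le> 1) \<and> Linf_bound (ball 0 1) f \<delta>0 \<and>
        (u has_derivative (\<lambda>h. g0 \<bullet> h)) (at 0)
      \<longrightarrow> (\<forall>r. 0 < r \<and> r \<le> r0 \<longrightarrow>
            (\<forall>x\<in>ball 0 r. \<bar>u x - u 0\<bar> \<le>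
               C * r powr (p / (p - 1)) * (1 + norm g0 * r powr (1 / (1 - p))))))"
proof -
  have p: "p > 2" by fact
  obtain lam where lam: "0 < lam" "lam < 1/2" and L41: "lemma41_prop p lam \<delta>0" using assms(3) by blast
  define \<beta> where "\<beta> = p / (p - 1)"
  have \<beta>1: "\<beta> > 1" using p by (simp add: \<beta>_def field_simps)
  define L where "L = lam powr \<beta>"
  have L0: "0 < L" using lam by (simp add: L_def)
  have Llam: "L < lam"
  proof -
    have "lam powr \<beta> < lam powr 1" using lam \<beta>1 by (intro powr_less_mono') auto
    then show ?thesis using lam by (simp add: L_def)
  qed
  define Bb where "Bb = lam / (lam - L)"
  have Bb0: "Bb > 0" using Llam lam by (simp add: Bb_def)
  have Bbeq: "lam + Bb * L = Bb * lam" using Llam by (simp add: Bb_def field_simps)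
  define C where "C = 2 / L + Bb / lam + 1"
  have C1: "C > 1" using L0 Bb0 lam by (simp add: C_def add_pos_pos)
  show ?thesis
  proof (rule exI[of _ C], rule exI[of _ "1::real"], intro conjI allI impI ballI C1 zero_less_one order_refl)
    fix u G f g0 r and x :: "real^2"
    assume H: "weak_sol_plap p (ball 0 1) u G f \<and> continuous_on (ball 0 1) u \<and>
        (\<forall>x\<in>ball 0 1. \<bar>u x\<bar> \<le> 1) \<and> Linf_bound (ball 0 1) f \<delta>0 \<and>
        (u has_derivative (\<lambda>h. g0 \<bullet> h)) (at 0)"
    assume r: "0 < r \<and> r \<le> 1" and x: "x \<in> ball 0 r"
    from H have ws: "weak_sol_plap p (ball 0 1) u G f" and cu: "continuous_on (ball 0 1) u"
      and ub: "\<forall>x\<in>ball 0 1. \<bar>u x\<bar> \<le> 1" and fb: "Linf_bound (ball 0 1) f \<delta>0"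
      and ud: "(u has_derivative (\<lambda>h. g0 \<bullet> h)) (at 0)" by blast+
    define N where "N k = 2 * L ^ k + Bb * norm g0 * lam ^ k" for k
    have claim: "\<forall>y\<in>ball 0 (lam ^ k). \<bar>u y - u 0\<bar> \<le> N k" for k
    proof (induction k)
      case 0
      show ?case
      proof
        fix y :: "real^2" assume "y \<in> ball 0 (lam ^ 0)"
        then have "y \<in> ball 0 1" by simp
        then have "\<bar>u y\<bar> \<le> 1" "\<bar>u 0\<bar> \<le> 1" using ub by auto
        moreover have "0 \<le> Bb * norm g0" using Bb0 by simp
        ultimately show "\<bar>u y - u 0\<bar> \<le> N 0" unfolding N_def by simp
      qed
    next
      case (Suc k)
      define s where "s = lam ^ k"
      have s0: "0 < s" using lam by (simp add: s_def)
      have s1: "s \<le> 1" using lam unfolding s_def by (intro power_le_one) auto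
      have Lk: "L ^ k = s powr \<beta>" unfolding s_def L_def by (rule pow_powr_swap[OF lam(1), symmetric])
      have Nk: "N k = 2 * s powr \<beta> + Bb * norm g0 * s" unfolding N_def Lk s_def ..
      have NL: "s powr \<beta> \<le> N k" unfolding Nk using Bb0 s0 by (simp add: add_nonneg_nonneg)
      have Npos: "0 < N k" using NL s0 by (smt (verit) powr_gt_zero)
      define a where "a = 1 / N k"
      have a0: "a > 0" using Npos by (simp add: a_def)
      have aN: "a * N k = 1" using Npos by (simp add: a_def)
      have kle: "(a * s) powr (p - 1) * s \<le> 1"
        unfolding a_def by (rule kle_lemma[OF p s0]) (use NL in \<open>simp add: \<beta>_def\<close>)
      define v where "v = (\<lambda>x. a * (u (s *\<^sub>R x) - u 0))"
      define Gv where "Gv = (\<lambda>x. (a * s) *\<^sub>R G (s *\<^sub>R x))"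
      define fv where "fv = (\<lambda>x. ((a * s) powr (p - 1) * s) * f (s *\<^sub>R x))"
      have tr: "weak_sol_plap p (ball 0 1) v Gv fv \<and> continuous_on (ball 0 1) v \<and> Linf_bound (ball 0 1) fv \<delta>0"
        unfolding v_def Gv_def fv_def
        by (rule transform[OF p ws cu ub fb assms(2) s0 s1 a0 kle])
      have vb: "\<forall>y\<in>ball 0 1. \<bar>v y\<bar> \<le> 1"
      proof
        fix y :: "real^2" assume y: "y \<in> ball 0 1"
        have "norm y < 1" using y by simp
        then have "s * norm y < s * 1" using s0 by (intro mult_strict_left_mono) auto
        then have "s *\<^sub>R y \<in> ball 0 (lam ^ k)" using s0 by (simp add: s_def)
        then have "\<bar>u (s *\<^sub>R y) - u 0\<bar> \<le> N k" using Suc.IH by blast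
        then have "a * \<bar>u (s *\<^sub>R y) - u 0\<bar> \<le> a * N k" using a0 by (intro mult_left_mono) auto
        then show "\<bar>v y\<bar> \<le> 1" using a0 aN by (simp add: v_def abs_mult)
      qed
      have vd: "(v has_derivative (\<lambda>h. ((a * s) *\<^sub>R g0) \<bullet> h)) (at 0)"
      proof -
        have ud': "(u has_derivative (\<lambda>h. g0 \<bullet> h)) (at (s *\<^sub>R 0))" using ud by simp
        have lin: "((\<lambda>x::real^2. s *\<^sub>R x) has_derivative (\<lambda>h. s *\<^sub>R h)) (at 0)"
          by (rule linear_imp_has_derivative[OF bounded_linear.linear[OF bounded_linear_scaleR_right]])
        have "((\<lambda>x. u (s *\<^sub>R x)) has_derivative (\<lambda>h. g0 \<bullet> (s *\<^sub>R h))) (at 0)"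
          using has_derivative_compose[OF lin ud'] by simp
        then have "(v has_derivative (\<lambda>h. a * (g0 \<bullet> (s *\<^sub>R h) - 0))) (at 0)"
          unfolding v_def by (intro derivative_intros)
        moreover have "(\<lambda>h. a * (g0 \<bullet> (s *\<^sub>R h) - 0)) = (\<lambda>h. ((a * s) *\<^sub>R g0) \<bullet> h)"
          by (simp add: mult.assoc)
        ultimately show ?thesis by simp
      qed
      have lb: "\<forall>y\<in>ball 0 lam. \<bar>v y - v 0 - ((a * s) *\<^sub>R g0) \<bullet> y\<bar> \<le> lam powr (p / (p - 1))"
        using L41 tr vb vd unfolding lemma41_prop_def by blast
      show ?case
      proof
        fix y :: "real^2" assume y: "y \<in> ball 0 (lam ^ Suc k)"
        define z where "z = y /\<^sub>R s"
        have yz: "s *\<^sub>R z = y" using s0 by (simp add: z_def)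
        have nz: "norm z < lam"
        proof -
          have "norm y < lam ^ Suc k" using y by simp
          then have "norm y < s * lam" by (simp add: s_def mult.commute)
          then show ?thesis using s0 by (simp add: z_def field_simps)
        qed
        have "\<bar>v z - v 0 - ((a * s) *\<^sub>R g0) \<bullet> z\<bar> \<le> L" using lb nz unfolding L_def \<beta>_def by simp
        moreover have "v 0 = 0" by (simp add: v_def)
        moreover have "v z = a * (u y - u 0)" by (simp add: v_def yz)
        moreover have "\<bar>((a * s) *\<^sub>R g0) \<bullet> z\<bar> \<le> (a * s) * norm g0 * lam"
        proof -
          have "\<bar>((a * s) *\<^sub>R g0) \<bullet> z\<bar> \<le> norm ((a * s) *\<^sub>R g0) * norm z" by (rule Cauchy_Schwarz_ineq2)
          also have "\<dots> \<le> norm ((a * s) *\<^sub>R g0) * lam" using nz by (intro mult_left_mono) auto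
          also have "norm ((a * s) *\<^sub>R g0) = (a * s) * norm g0" using a0 s0 by simp
          finally show ?thesis .
        qed
        ultimately have e1: "\<bar>a * (u y - u 0) - ((a * s) *\<^sub>R g0) \<bullet> z\<bar> \<le> L"
          and e2: "\<bar>((a * s) *\<^sub>R g0) \<bullet> z\<bar> \<le> (a * s) * norm g0 * lam" by simp_all
        have e3: "a * \<bar>u y - u 0\<bar> = \<bar>a * (u y - u 0)\<bar>" using a0 by (simp add: abs_mult)
        have "a * \<bar>u y - u 0\<bar> \<le> (a * s) * norm g0 * lam + L"
          unfolding e3 using e1 e2 by linarith
        then have "N k * (a * \<bar>u y - u 0\<bar>) \<le> N k * ((a * s) * norm g0 * lam + L)"
          using Npos by (intro mult_left_mono) auto
        moreover have "N k * (a * \<bar>u y - u 0\<bar>) = (a * N k) * \<bar>u y - u 0\<bar>" by (simp add: algebra_simps)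
        moreover have "N k * ((a * s) * norm g0 * lam + L) = (a * N k) * (s * norm g0 * lam) + N k * L"
          by (simp add: algebra_simps)
        ultimately have "\<bar>u y - u 0\<bar> \<le> s * norm g0 * lam + N k * L"
          unfolding aN by simp
        also have "\<dots> = 2 * L ^ Suc k + norm g0 * s * (lam + Bb * L)"
          by (simp add: N_def s_def algebra_simps)
        also have "\<dots> = N (Suc k)" unfolding Bbeq by (simp add: N_def s_def algebra_simps)
        finally show "\<bar>u y - u 0\<bar> \<le> N (Suc k)" .
      qed
    qed
    have r0: "0 < r" "r \<le> 1" using r by auto
    have lam1: "lam < 1" using lam by simp
    obtain n where n: "lam ^ n < r" using real_arch_pow_inv[OF r0(1) lam1] by blast
    define m where "m = (LEAST n. lam ^ n < r)"
    have m1: "lam ^ m < r" unfolding m_def by (rule LeastI[of _ n]) (rule n)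
    have m0: "m \<noteq> 0" using m1 r0 by (metis power_0 not_less)
    define k where "k = m - 1"
    have mk: "m = Suc k" using m0 by (simp add: k_def)
    have kr: "r \<le> lam ^ k"
    proof (rule ccontr)
      assume "\<not> r \<le> lam ^ k"
      then have "lam ^ k < r" by simp
      then have "m \<le> k" unfolding m_def by (rule Least_le)
      then show False using mk by simp
    qed
    have kr2: "lam ^ k * lam < r" using m1 mk by (simp add: mult.commute)
    have xk: "x \<in> ball 0 (lam ^ k)" using x kr by simp
    have bnd: "\<bar>u x - u 0\<bar> \<le> 2 * L ^ k + Bb * norm g0 * lam ^ k" using claim[of k] xk unfolding N_def by blast
    have lk: "lam ^ k \<le> r / lam" using kr2 lam by (simp add: field_simps)
    have Lk: "L ^ k \<le> r powr \<beta> / L"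
    proof -
      have "L ^ k = (lam ^ k) powr \<beta>" unfolding L_def by (rule pow_powr_swap[OF lam(1), symmetric])
      also have "\<dots> \<le> (r / lam) powr \<beta>" using lk lam \<beta>1 by (intro powr_mono2) auto
      also have "\<dots> = r powr \<beta> / L" using lam r0 by (simp add: powr_divide L_def)
      finally show ?thesis .
    qed
    have "\<bar>u x - u 0\<bar> \<le> 2 * (r powr \<beta> / L) + Bb * norm g0 * (r / lam)"
      using bnd Lk lk Bb0 by (smt (verit) mult_left_mono norm_ge_zero mult_nonneg_nonneg)
    also have "\<dots> = (2 / L) * r powr \<beta> + (Bb / lam) * (norm g0 * r)" by (simp add: algebra_simps)
    also have "\<dots> \<le> C * r powr \<beta> + C * (norm g0 * r)"
    proof (intro add_mono mult_right_mono)
      show "2 / L \<le> C" "Bb / lam \<le> C" using Bb0 L0 lam by (simp_all add: C_def)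
    qed (use r0 in simp_all)
    also have "\<dots> = C * r powr (p / (p - 1)) * (1 + norm g0 * r powr (1 / (1 - p)))"
    proof -
      have "r powr \<beta> * r powr (1 / (1 - p)) = r powr (\<beta> + 1 / (1 - p))" by (simp add: powr_add)
      also have "\<beta> + 1 / (1 - p) = 1"
      proof -
        have "p - 1 \<noteq> 0" "1 - p \<noteq> 0" using p by auto
        have "1 / (1 - p) = - 1 / (p - 1)" using \<open>p - 1 \<noteq> 0\<close> \<open>1 - p \<noteq> 0\<close>
          by (simp add: field_simps)
        then show ?thesis unfolding \<beta>_def using \<open>p - 1 \<noteq> 0\<close> by (simp add: diff_divide_distrib[symmetric])
      qed
      finally have "r powr \<beta> * r powr (1 / (1 - p)) = r" using r0 by simp
      then show ?thesis by (simp add: \<beta>_def algebra_simps)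
    qed
    finally show "\<bar>u x - u 0\<bar> \<le> C * r powr (p / (p - 1)) * (1 + norm g0 * r powr (1 / (1 - p)))" .
  qed
qed

end
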